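(* There exists a unique $\delta_\beta\in(0,b)$ with $\varphi(\delta_\beta)=\beta N$; moreover $\varphi(\delta)>\beta N$ for $\delta\in(0,\delta_\beta)$ and $\varphi(\delta)<\beta N$ for $\delta\in(\delta_\beta,b)$. The function $G$ is strictly increasing on $(0,\delta_\beta]$; consequently every maximizer $\delta^\ast$ of $G$ over $(0,b)$ satisfies $\delta^\ast\ge\delta_\beta$.
   Context: Parameters: $N>0$, $\sigma>0$, $b>0$, $\beta>0$. $\Phi$ and $\phi$ denote the standard normal cdf and pdf. For $\delta\in(0,b)$ let $q(\delta)=\frac{e^{b-\delta}-1}{e^b-1}\in(0,1)$ and $\varphi(\delta)=N\exp\!\left[\sigma\,\Phi^{-1}(q(\delta))-\delta-\frac{\sigma^2}{2}\right]$ (the vault's unconstrained optimal stablecoin issuance at interest rate $\delta$). Let $F^\ast(\delta)=\min(\varphi(\delta),\beta N)$ and define the governance objective $G(\delta)=F^\ast(\delta)(e^\delta-1)$ for $\delta\in(0,b)$. *)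

theory Defs
  imports "HOL-Probability.Probability"
begin

definition Phi :: "real \<Rightarrow> real" where
  "Phi x = (LINT t:{..x}|lborel. std_normal_density t)"

definition Phi_inv :: "real \<Rightarrow> real" where
  "Phi_inv q = (THE x. Phi x = q)"

definition qfun :: "real \<Rightarrow> real \<Rightarrow> real" where
  "qfun b d = (exp (b - d) - 1) / (exp b - 1)"

text \<open>Unconstrained optimal stablecoin issuance at interest rate d.\<close>
definition varphi :: "real \<Rightarrow> real \<Rightarrow> real \<Rightarrow> real \<Rightarrow> real" where
  "varphi N \<sigma> b d = N * exp (\<sigma> * Phi_inv (qfun b d) - d - \<sigma>\<^sup>2 / 2)"

definition Fstar :: "real \<Rightarrow> real \<Rightarrow> real \<Rightarrow> real \<Rightarrow> real \<Rightarrow> real" where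
  "Fstar N \<sigma> b \<beta> d = min (varphi N \<sigma> b d) (\<beta> * N)"

definition Gobj :: "real \<Rightarrow> real \<Rightarrow> real \<Rightarrow> real \<Rightarrow> real \<Rightarrow> real" where
  "Gobj N \<sigma> b \<beta> d = Fstar N \<sigma> b \<beta> d * (exp d - 1)"

end

theory Submission imports Defs begin

abbreviation "SN \<equiv> density lborel (\<lambda>t. ennreal (std_normal_density t))"

lemma SN_rd: "real_distribution SN"
  unfolding real_distribution_def real_distribution_axioms_def
  using prob_space_normal_density by simp

lemma Phi_cdf: "Phi x = cdf SN x"
proof -
  have "cdf SN x = integral\<^sup>L SN (indicator {..x})"
    by (simp add: cdf_def)
  also have "\<dots> = integral\<^sup>L lborel (\<lambda>t. std_normal_density t *\<^sub>R indicator {..x} t)"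
    by (rule integral_density) auto
  also have "\<dots> = Phi x"
    unfolding Phi_def set_lebesgue_integral_def by (simp add: mult.commute)
  finally show ?thesis by simp
qed

lemma Phi_strict: assumes "x < y" shows "Phi x < Phi y"
proof -
  interpret real_distribution SN by (rule SN_rd)
  define c where "c = (1 / sqrt (2 * pi)) * exp (- (\<bar>x\<bar>+\<bar>y\<bar>)\<^sup>2 / 2)"
  have cpos: "c > 0" unfolding c_def by simp
  have bound: "ennreal c * indicator {x<..y} t \<le> ennreal (std_normal_density t) * indicator {x<..y} t" for t
  proof (cases "t \<in> {x<..y}")
    case True
    then have "\<bar>t\<bar>\<^sup>2 \<le> (\<bar>x\<bar>+\<bar>y\<bar>)\<^sup>2"
      by (intro power_mono) auto
    then have "t\<^sup>2 \<le> (\<bar>x\<bar>+\<bar>y\<bar>)\<^sup>2" by simp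
    then have "exp (- (\<bar>x\<bar>+\<bar>y\<bar>)\<^sup>2 / 2) \<le> exp (- t\<^sup>2 / 2)" by simp
    then have "c \<le> std_normal_density t" unfolding c_def std_normal_density_def
      by (intro mult_left_mono) auto
    then show ?thesis using True by (simp add: ennreal_leI)
  qed simp
  have "ennreal (c * (y - x)) = (\<integral>\<^sup>+ t. ennreal c * indicator {x<..y} t \<partial>lborel)"
    using assms cpos by (simp add: nn_integral_cmult_indicator ennreal_mult)
  also have "\<dots> \<le> (\<integral>\<^sup>+ t. ennreal (std_normal_density t) * indicator {x<..y} t \<partial>lborel)"
    by (rule nn_integral_mono) (rule bound)
  also have "\<dots> = emeasure SN {x<..y}"
    by (simp add: emeasure_density)
  finally have "0 < emeasure SN {x<..y}"
    using assms cpos by (metis ennreal_eq_0_iff leD less_eq_real_def linorder_not_le mult_pos_pos diff_gt_0_iff_gt order.strict_trans1 not_gr_zero)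
  then have "0 < measure SN {x<..y}"
    by (simp add: emeasure_eq_measure)
  then show ?thesis using cdf_diff_eq[OF assms] by (simp add: Phi_cdf)
qed

lemma Phi_cont: "isCont Phi x"
proof -
  interpret real_distribution SN by (rule SN_rd)
  have "emeasure SN {x} = (\<integral>\<^sup>+ t. ennreal (std_normal_density t) * indicator {x} t \<partial>lborel)"
    by (simp add: emeasure_density)
  also have "\<dots> \<le> (\<integral>\<^sup>+ t. 1 * indicator {x} t \<partial>lborel)"
  proof (rule nn_integral_mono)
    fix t
    have "std_normal_density t \<le> 1"
    proof -
      have "sqrt (2*pi) \<ge> 1" using pi_gt3 by simp
      moreover have "exp (- t\<^sup>2 / 2) \<le> 1" by simp
      ultimately have "exp (- t\<^sup>2 / 2) \<le> sqrt (2*pi)" by linarith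
      then show ?thesis unfolding std_normal_density_def
        by (simp add: divide_le_eq)
    qed
    then show "ennreal (std_normal_density t) * indicator {x} t \<le> 1 * indicator {x} t"
      by (cases "t = x") (auto simp: indicator_def)
  qed
  also have "\<dots> = 0" by simp
  finally have "measure SN {x} = 0" by (simp add: emeasure_eq_measure)
  then have "isCont (cdf SN) x" using isCont_cdf by simp
  moreover have "Phi = cdf SN" using Phi_cdf by auto
  ultimately show ?thesis by simp
qed

lemma Phi_lims: "(Phi \<longlongrightarrow> 0) at_bot" "(Phi \<longlongrightarrow> 1) at_top"
proof -
  interpret real_distribution SN by (rule SN_rd)
  have "Phi = cdf SN" using Phi_cdf by auto
  then show "(Phi \<longlongrightarrow> 0) at_bot" "(Phi \<longlongrightarrow> 1) at_top"
    using cdf_lim_at_bot cdf_lim_at_top_prob by auto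
qed

lemma Phi_le1: "Phi x \<le> 1" and Phi_ge0: "0 \<le> Phi x"
proof -
  interpret real_distribution SN by (rule SN_rd)
  show "Phi x \<le> 1" "0 \<le> Phi x" using cdf_bounded_prob cdf_nonneg by (auto simp: Phi_cdf)
qed

lemma Phi_bounds: "0 < Phi x" "Phi x < 1"
proof -
  have "Phi (x - 1) < Phi x" by (rule Phi_strict) simp
  then show "0 < Phi x" using Phi_ge0[of "x - 1"] by linarith
  have "Phi x < Phi (x + 1)" by (rule Phi_strict) simp
  then show "Phi x < 1" using Phi_le1[of "x + 1"] by linarith
qed

lemma Phi_surj: assumes "0 < q" "q < 1" shows "\<exists>x. Phi x = q"
proof -
  have "eventually (\<lambda>x. Phi x < q) at_bot"
    using order_tendstoD(2)[OF Phi_lims(1) assms(1)] .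
  then obtain a where a: "Phi a < q" by (auto simp: eventually_at_bot_linorder)
  have "eventually (\<lambda>x. Phi x > q) at_top"
    using order_tendstoD(1)[OF Phi_lims(2) assms(2)] .
  then obtain c where c: "Phi c > q" by (auto simp: eventually_at_top_linorder)
  have ac: "a \<le> c"
  proof (rule ccontr)
    assume "\<not> a \<le> c"
    then have "Phi c < Phi a" by (intro Phi_strict) simp
    then show False using a c by linarith
  qed
  show ?thesis using IVT[of Phi a q c] a c ac Phi_cont by auto
qed

lemma Phi_inv_eq: assumes "0 < q" "q < 1" shows "Phi (Phi_inv q) = q"
proof -
  obtain x where x: "Phi x = q" using Phi_surj[OF assms] by blast
  have "y = x" if "Phi y = q" for y
  proof (cases y x rule: linorder_cases)
    case less then show ?thesis using Phi_strict[OF less] that x by simp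
  next
    case greater then show ?thesis using Phi_strict[OF greater] that x by simp
  qed
  then have "Phi_inv q = x" unfolding Phi_inv_def using x by (rule the_equality[rotated])
  then show ?thesis using x by simp
qed

lemma qfun_props:
  assumes "b > 0"
  shows "qfun b 0 = 1" "qfun b b = 0"
    "\<And>d. 0 < d \<Longrightarrow> d < b \<Longrightarrow> 0 < qfun b d \<and> qfun b d < 1"
    "\<And>x y. x < y \<Longrightarrow> qfun b y < qfun b x"
    "continuous_on UNIV (qfun b)"
proof -
  have eb: "exp b - 1 > 0" using assms by simp
  show "qfun b 0 = 1" "qfun b b = 0" using eb by (simp_all add: qfun_def)
  show "0 < qfun b d \<and> qfun b d < 1" if "0 < d" "d < b" for d
  proof -
    have "0 < exp (b - d) - 1" "exp (b - d) - 1 < exp b - 1" using that by auto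
    then show ?thesis using eb unfolding qfun_def by (simp add: divide_less_eq)
  qed
  show "qfun b y < qfun b x" if "x < y" for x y
  proof -
    have "exp (b - y) - 1 < exp (b - x) - 1" using that by simp
    then show ?thesis using eb unfolding qfun_def by (simp add: divide_strict_right_mono)
  qed
  show "continuous_on UNIV (qfun b)" unfolding qfun_def
    using eb by (intro continuous_intros) auto
qed

lemma Phi_less_iff: "Phi x < Phi y \<longleftrightarrow> x < y"
proof
  assume "Phi x < Phi y"
  show "x < y"
  proof (rule ccontr)
    assume "\<not> x < y"
    then have "y \<le> x" by simp
    then have "Phi y \<le> Phi x" using Phi_strict[of y x] by (cases "y = x") auto
    then show False using \<open>Phi x < Phi y\<close> by simp
  qed
qed (rule Phi_strict)

lemma varphi_cmp:
  fixes N \<sigma> b \<beta> d :: real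
  assumes "N > 0" "\<sigma> > 0" "b > 0" "\<beta> > 0" "0 < d" "d < b"
  defines "h \<equiv> (ln \<beta> + d + \<sigma>\<^sup>2 / 2) / \<sigma>"
  shows "varphi N \<sigma> b d > \<beta> * N \<longleftrightarrow> qfun b d > Phi h"
    and "varphi N \<sigma> b d < \<beta> * N \<longleftrightarrow> qfun b d < Phi h"
proof -
  define X where "X = Phi_inv (qfun b d)"
  have PX: "Phi X = qfun b d" unfolding X_def
    using qfun_props(3)[OF assms(3,5,6)] Phi_inv_eq by auto
  have bN: "\<beta> * N = N * exp (ln \<beta>)" using assms by simp
  have v: "varphi N \<sigma> b d = N * exp (\<sigma> * X - d - \<sigma>\<^sup>2 / 2)"
    unfolding varphi_def X_def ..
  have "varphi N \<sigma> b d > \<beta> * N \<longleftrightarrow> \<sigma> * X - d - \<sigma>\<^sup>2 / 2 > ln \<beta>"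
    unfolding v bN using assms(1) by simp
  also have "\<dots> \<longleftrightarrow> X > h" unfolding h_def using assms(2)
    by (simp add: pos_divide_less_eq algebra_simps)
  also have "\<dots> \<longleftrightarrow> qfun b d > Phi h" using Phi_less_iff PX by metis
  finally show "varphi N \<sigma> b d > \<beta> * N \<longleftrightarrow> qfun b d > Phi h" .
  have "varphi N \<sigma> b d < \<beta> * N \<longleftrightarrow> \<sigma> * X - d - \<sigma>\<^sup>2 / 2 < ln \<beta>"
    unfolding v bN using assms(1) by simp
  also have "\<dots> \<longleftrightarrow> X < h" unfolding h_def using assms(2)
    by (simp add: pos_less_divide_eq algebra_simps)
  also have "\<dots> \<longleftrightarrow> qfun b d < Phi h" using Phi_less_iff PX by metis
  finally show "varphi N \<sigma> b d < \<beta> * N \<longleftrightarrow> qfun b d < Phi h" .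
qed

theorem proposition2:
  fixes N \<sigma> b \<beta> :: real
  assumes "N > 0" and "\<sigma> > 0" and "b > 0" and "\<beta> > 0"
  shows "\<exists>d\<beta> \<in> {0<..<b}.
           varphi N \<sigma> b d\<beta> = \<beta> * N
         \<and> (\<forall>d \<in> {0<..<b}. varphi N \<sigma> b d = \<beta> * N \<longrightarrow> d = d\<beta>)
         \<and> (\<forall>d \<in> {0<..<d\<beta>}. varphi N \<sigma> b d > \<beta> * N)
         \<and> (\<forall>d \<in> {d\<beta><..<b}. varphi N \<sigma> b d < \<beta> * N)
         \<and> strict_mono_on {0<..d\<beta>} (Gobj N \<sigma> b \<beta>)
         \<and> (\<forall>ds \<in> {0<..<b}. (\<forall>d \<in> {0<..<b}. Gobj N \<sigma> b \<beta> d \<le> Gobj N \<sigma> b \<beta> ds)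
               \<longrightarrow> ds \<ge> d\<beta>)"
proof -
  define h where "h d = (ln \<beta> + d + \<sigma>\<^sup>2 / 2) / \<sigma>" for d
  define k where "k d = qfun b d - Phi (h d)" for d
  have hmono: "h x < h y" if "x < y" for x y
    unfolding h_def using that assms(2) by (simp add: divide_strict_right_mono)
  have kdec: "k y < k x" if "x < y" for x y
    unfolding k_def using qfun_props(4)[OF assms(3) that] Phi_strict[OF hmono[OF that]] by simp
  have kcont: "isCont k x" for x
  proof -
    have "isCont (qfun b) x" using qfun_props(5)[OF assms(3)]
      by (simp add: continuous_on_eq_continuous_at)
    moreover have "isCont h x" unfolding h_def using assms(2) by (intro continuous_intros) auto
    then have "isCont (\<lambda>d. Phi (h d)) x" using Phi_cont isCont_o2 by blast
    ultimately show ?thesis unfolding k_def by (intro continuous_intros)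
  qed
  have k0: "k 0 > 0" unfolding k_def using qfun_props(1)[OF assms(3)] Phi_bounds by simp
  have kb: "k b < 0" unfolding k_def using qfun_props(2)[OF assms(3)] Phi_bounds by simp
  obtain d\<beta> where d1: "0 \<le> d\<beta>" "d\<beta> \<le> b" and kd: "k d\<beta> = 0"
    using IVT2[of k b 0 0] k0 kb kcont assms(3) by auto
  have dpos: "0 < d\<beta>" using d1 kd k0 by (cases "d\<beta> = 0") auto
  have dltb: "d\<beta> < b" using d1 kd kb by (cases "d\<beta> = b") auto
  have gt: "varphi N \<sigma> b d > \<beta> * N" if "0 < d" "d < d\<beta>" for d
  proof -
    have "k d > 0" using kdec[OF that(2)] kd by simp
    then show ?thesis using varphi_cmp(1)[OF assms that(1)] that dltb
      unfolding k_def h_def by simp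
  qed
  have lt: "varphi N \<sigma> b d < \<beta> * N" if "d\<beta> < d" "d < b" for d
  proof -
    have "k d < 0" using kdec[OF that(1)] kd by simp
    then show ?thesis using varphi_cmp(2)[OF assms _ that(2)] that dpos
      unfolding k_def h_def by simp
  qed
  have eq: "varphi N \<sigma> b d\<beta> = \<beta> * N"
    using varphi_cmp[OF assms dpos dltb] kd unfolding k_def h_def by simp
  have uniq: "d = d\<beta>" if "0 < d" "d < b" "varphi N \<sigma> b d = \<beta> * N" for d
    using gt[of d] lt[of d] that by (cases d d\<beta> rule: linorder_cases) auto
  have Geq: "Gobj N \<sigma> b \<beta> d = \<beta> * N * (exp d - 1)" if "0 < d" "d \<le> d\<beta>" for d
  proof -
    have "varphi N \<sigma> b d \<ge> \<beta> * N"
      using gt[of d] eq that by (cases "d = d\<beta>") auto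
    then show ?thesis unfolding Gobj_def Fstar_def by simp
  qed
  have Gmono: "strict_mono_on {0<..d\<beta>} (Gobj N \<sigma> b \<beta>)"
  proof (rule strict_mono_onI)
    fix r s assume rs: "r \<in> {0<..d\<beta>}" "s \<in> {0<..d\<beta>}" "r < s"
    have "exp r - 1 < exp s - 1" using rs by simp
    moreover have "\<beta> * N > 0" using assms by simp
    ultimately have "\<beta> * N * (exp r - 1) < \<beta> * N * (exp s - 1)"
      by (rule mult_strict_left_mono)
    moreover have "r \<le> d\<beta>" using rs by simp
    ultimately show "Gobj N \<sigma> b \<beta> r < Gobj N \<sigma> b \<beta> s"
      using Geq[of r] Geq[of s] rs by simp
  qed
  have maxi: "ds \<ge> d\<beta>" if "ds \<in> {0<..<b}"
     "\<forall>d \<in> {0<..<b}. Gobj N \<sigma> b \<beta> d \<le> Gobj N \<sigma> b \<beta> ds" for ds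
  proof (rule ccontr)
    assume "\<not> ds \<ge> d\<beta>"
    then have "ds < d\<beta>" by simp
    then have "Gobj N \<sigma> b \<beta> ds < Gobj N \<sigma> b \<beta> d\<beta>"
      using strict_mono_onD[OF Gmono, of ds d\<beta>] that(1) dpos by simp
    moreover have "d\<beta> \<in> {0<..<b}" using dpos dltb by simp
    then have "Gobj N \<sigma> b \<beta> d\<beta> \<le> Gobj N \<sigma> b \<beta> ds" using that(2) by blast
    ultimately show False by simp
  qed
  show ?thesis
  proof (rule bexI[of _ d\<beta>])
    show "d\<beta> \<in> {0<..<b}" using dpos dltb by simp
    show "varphi N \<sigma> b d\<beta> = \<beta> * N
         \<and> (\<forall>d \<in> {0<..<b}. varphi N \<sigma> b d = \<beta> * N \<longrightarrow> d = d\<beta>)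
         \<and> (\<forall>d \<in> {0<..<d\<beta>}. varphi N \<sigma> b d > \<beta> * N)
         \<and> (\<forall>d \<in> {d\<beta><..<b}. varphi N \<sigma> b d < \<beta> * N)
         \<and> strict_mono_on {0<..d\<beta>} (Gobj N \<sigma> b \<beta>)
         \<and> (\<forall>ds \<in> {0<..<b}. (\<forall>d \<in> {0<..<b}. Gobj N \<sigma> b \<beta> d \<le> Gobj N \<sigma> b \<beta> ds)
               \<longrightarrow> ds \<ge> d\<beta>)"
      using eq uniq gt lt Gmono maxi by simp
  qed
qed

end
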